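(* Let $L=\mathbb Z\alpha_1\oplus\mathbb Z\alpha_2\oplus\mathbb Z\alpha_3$ with $\langle\alpha_i,\alpha_j\rangle=2\delta_{ij}$ and put $\beta_1=(\alpha_1+\alpha_2)/\sqrt2$, $\beta_2=(-\alpha_2+\alpha_3)/\sqrt2$, $\beta_3=(-\alpha_1+\alpha_2)/\sqrt2$ (simple roots of type $A_3$). With $w_\beta^{\pm}$, $s^i$, $\omega$, $\tau$ as in the context, one has in $V_L$: $\tau(s^1)=\frac18 w^+_{\beta_3}$, $\tau(s^2)=\frac1{10}(w^+_{\beta_3}+w^-_{\beta_2}+w^+_{\beta_2+\beta_3})$, $\tau(s^3)=\frac1{12}(w^+_{\beta_3}+w^-_{\beta_2}+w^+_{\beta_2+\beta_3}+w^-_{\beta_3}+w^-_{\beta_2+\beta_3}+w^+_{\beta_2})=\frac16(\beta_2(-1)^2+\beta_3(-1)^2+(\beta_2+\beta_3)(-1)^2)$, $\tau(\omega)=\omega$.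
   Context: $V_L=M(1)\otimes\mathbb C[L]=V_{\mathbb Z\alpha_1}\otimes V_{\mathbb Z\alpha_2}\otimes V_{\mathbb Z\alpha_3}$ is the lattice vertex operator algebra with trivial cocycle ($M(1)$ the Heisenberg Fock space of $\mathfrak h=\mathbb C\otimes L$, $e^\beta$ group algebra basis elements, $h(-1)$ the Heisenberg generators, $h(-1)^2$ meaning $h(-1)h(-1)\mathbf 1$). For a root $\beta$ of the $A_3$ root system $\Phi_3$ generated by $\beta_1,\beta_2,\beta_3$ (so $\sqrt2\beta\in L$), $w_\beta^{\pm}=\beta(-1)^2\pm2(e^{\sqrt2\beta}+e^{-\sqrt2\beta})$. Let $\Phi_1^+=\{\beta_1\}$, $\Phi_2^+=\{\beta_1,\beta_2,\beta_1+\beta_2\}$, $\Phi_3^+=\Phi_2^+\cup\{\beta_3,\beta_2+\beta_3,\beta_1+\beta_2+\beta_3\}$, $s^i=\frac1{2(i+3)}\sum_{\beta\in\Phi_i^+}w_\beta^-$ for $i=1,2,3$, and $\omega=\frac18\sum_{\beta\in\Phi_3^+}\beta(-1)^2$ (the Virasoro element). For $\langle\alpha,\alpha\rangle=2$, $\sigma$ is the unique vertex operator algebra automorphism of $V_{\mathbb Z\alpha}$ whose restriction to the weight-one Lie algebra $\mathrm{span}\{\alpha(-1),e^{\alpha},e^{-\alpha}\}\cong sl_2(\mathbb C)$ is $\alpha(-1)\mapsto e^\alpha+e^{-\alpha}$, $e^\alpha+e^{-\alpha}\mapsto\alpha(-1)$, $e^\alpha-e^{-\alpha}\mapsto-(e^\alpha-e^{-\alpha})$;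 and $\tau=\sigma\otimes\sigma\otimes\sigma$ on $V_L$. *)

theory Defs
  imports Complex_Main "HOL-Library.Poly_Mapping" "HOL-Library.Multiset" "HOL-Library.Function_Algebras"
begin

text \<open>Concrete model of the lattice VOA V_L, L = Z a1 + Z a2 + Z a3, <ai,aj> = 2 delta_ij,
 with trivial cocycle.  A basis vector of V_L = M(1) (x) C[L] is a pair (M, g):
 M is a multiset of pairs (i,n), n >= 1, standing for the monomial prod ai(-n)
 applied to the vacuum, and g :: idx => int is the lattice vector sum g(i) ai (e^g).\<close>

datatype idx = A1 | A2 | A3

definition idxs :: "idx set" where "idxs = {A1, A2, A3}"

type_synonym lat = "idx \<Rightarrow> int"
type_synonym mono = "(idx \<times> nat) multiset"
type_synonym bas = "mono \<times> lat"
type_synonym vl = "bas \<Rightarrow>\<^sub>0 complex"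

definition ip :: "lat \<Rightarrow> lat \<Rightarrow> int" where
  "ip l m = 2 * (\<Sum>i\<in>idxs. l i * m i)"

definition unitlat :: "idx \<Rightarrow> lat" where
  "unitlat i = (\<lambda>j. if j = i then 1 else 0)"

definition smul :: "complex \<Rightarrow> vl \<Rightarrow> vl" where
  "smul c v = Poly_Mapping.map (\<lambda>x. c * x) v"

definition bv :: "mono \<Rightarrow> lat \<Rightarrow> vl" where
  "bv M g = Poly_Mapping.single (M, g) 1"

definition lin :: "(bas \<Rightarrow> vl) \<Rightarrow> vl \<Rightarrow> vl" where
  "lin f v = (\<Sum>b\<in>Poly_Mapping.keys v. smul (Poly_Mapping.lookup v b) (f b))"

definition vac :: vl where "vac = bv {#} 0"

definition wt :: "mono \<Rightarrow> nat" where "wt M = sum_mset (image_mset snd M)"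

text \<open>Heisenberg operator ai(m): [ai(m), aj(n)] = 2 m delta_ij delta_{m+n,0};
 ai(0) acts on e^g by <ai,g> = 2 g(i).\<close>
definition hb :: "idx \<Rightarrow> int \<Rightarrow> bas \<Rightarrow> vl" where
  "hb i m b = (case b of (M, g) \<Rightarrow>
     if m < 0 then bv (add_mset (i, nat (- m)) M) g
     else if m = 0 then smul (of_int (2 * g i)) (bv M g)
     else smul (of_int (2 * m * int (count M (i, nat m)))) (bv (M - {#(i, nat m)#}) g))"

definition hmode :: "idx \<Rightarrow> int \<Rightarrow> vl \<Rightarrow> vl" where
  "hmode i m = lin (hb i m)"

definition hlat :: "lat \<Rightarrow> int \<Rightarrow> vl \<Rightarrow> vl" where
  "hlat l m v = (\<Sum>i\<in>idxs. smul (of_int (l i)) (hmode i m v))"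

text \<open>Coefficients S_j of z^j in exp(sum_{n>=1} X_n z^n / n) for commuting X_n,
 via j S_j = sum_{n=1}^j X_n S_{j-n}.\<close>
primrec Slist :: "(nat \<Rightarrow> vl \<Rightarrow> vl) \<Rightarrow> nat \<Rightarrow> (vl \<Rightarrow> vl) list" where
  "Slist X 0 = [id]"
| "Slist X (Suc j) = Slist X j @
     [\<lambda>v. smul (1 / of_nat (Suc j)) (\<Sum>n\<in>{1..Suc j}. X n ((Slist X j ! (Suc j - n)) v))]"

definition Sop :: "(nat \<Rightarrow> vl \<Rightarrow> vl) \<Rightarrow> nat \<Rightarrow> vl \<Rightarrow> vl" where
  "Sop X j = Slist X j ! j"

text \<open>Modes of Y(e^b, z) = E^-(-b,z) E^+(-b,z) e^b z^b = sum_n (e^b)_n z^(-n-1),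
 trivial cocycle.\<close>
definition eb :: "lat \<Rightarrow> int \<Rightarrow> bas \<Rightarrow> vl" where
  "eb l n b = (case b of (M, g) \<Rightarrow>
     (\<Sum>k\<in>{0..wt M}.
        (let j = int k - n - 1 - ip l g in
         if j < 0 then 0
         else Sop (\<lambda>m. hlat l (- int m)) (nat j)
                (Sop (\<lambda>m. \<lambda>v. - hlat l (int m) v) k (bv M (g + l))))))"

definition emode :: "lat \<Rightarrow> int \<Rightarrow> vl \<Rightarrow> vl" where
  "emode l n = lin (eb l n)"

definition hstate :: "idx \<Rightarrow> vl" where "hstate i = bv {#(i, 1)#} 0"
definition estate :: "lat \<Rightarrow> vl" where "estate l = bv {#} l"

text \<open>the weight-one space (V_L)_1 = span {ai(-1)1, e^{+-ai}}, and the
 modes a_n of a weight-one vector a (vertex operator Y(a,z) = sum a_n z^(-n-1))\<close>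
definition V1 :: "vl set" where
  "V1 = {a. Poly_Mapping.keys a \<subseteq>
          {({#(i, 1)#}, 0) | i. True} \<union> {({#}, unitlat i) | i. True}
          \<union> {({#}, - unitlat i) | i. True}}"

definition Y1 :: "vl \<Rightarrow> int \<Rightarrow> vl \<Rightarrow> vl" where
  "Y1 a n v = (\<Sum>i\<in>idxs.
      smul (Poly_Mapping.lookup a ({#(i, 1)#}, 0)) (hmode i n v)
    + smul (Poly_Mapping.lookup a ({#}, unitlat i)) (emode (unitlat i) n v)
    + smul (Poly_Mapping.lookup a ({#}, - unitlat i)) (emode (- unitlat i) n v))"

text \<open>Elements of h = C (x) L written in coordinates w.r.t. a1,a2,a3.\<close>
type_synonym hv = "idx \<Rightarrow> complex"

definition hsq :: "hv \<Rightarrow> vl" where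
  "hsq h = (\<Sum>i\<in>idxs. \<Sum>j\<in>idxs. smul (h i * h j) (bv {#(i, 1), (j, 1)#} 0))"

text \<open>the lattice vector sqrt 2 * beta (for a root beta of A_3)\<close>
definition sqrt2lat :: "hv \<Rightarrow> lat" where
  "sqrt2lat h = (\<lambda>i. THE k::int. of_int k = complex_of_real (sqrt 2) * h i)"

definition wplus :: "hv \<Rightarrow> vl" where
  "wplus h = hsq h + smul 2 (estate (sqrt2lat h) + estate (- sqrt2lat h))"
definition wminus :: "hv \<Rightarrow> vl" where
  "wminus h = hsq h - smul 2 (estate (sqrt2lat h) + estate (- sqrt2lat h))"

definition r2 :: complex where "r2 = complex_of_real (sqrt 2)"

definition beta1 :: hv where
  "beta1 = (\<lambda>i. case i of A1 \<Rightarrow> 1 / r2 | A2 \<Rightarrow> 1 / r2 | A3 \<Rightarrow> 0)"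
definition beta2 :: hv where
  "beta2 = (\<lambda>i. case i of A1 \<Rightarrow> 0 | A2 \<Rightarrow> - 1 / r2 | A3 \<Rightarrow> 1 / r2)"
definition beta3 :: hv where
  "beta3 = (\<lambda>i. case i of A1 \<Rightarrow> - 1 / r2 | A2 \<Rightarrow> 1 / r2 | A3 \<Rightarrow> 0)"

definition Phi :: "nat \<Rightarrow> hv list" where
  "Phi k = (if k = 1 then [beta1]
            else if k = 2 then [beta1, beta2, beta1 + beta2]
            else [beta1, beta2, beta1 + beta2, beta3, beta2 + beta3, beta1 + beta2 + beta3])"

definition sS :: "nat \<Rightarrow> vl" where
  "sS k = smul (1 / (2 * (of_nat k + 3))) (sum_list (map wminus (Phi k)))"

definition omega :: vl where
  "omega = smul (1 / 8) (sum_list (map hsq (Phi 3)))"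

end

theory Submission
  imports Defs
begin

lemma lookup_smul[simp]: "Poly_Mapping.lookup (smul c v) x = c * Poly_Mapping.lookup v x"
  by (simp add: smul_def map.rep_eq when_def)

lemma lookup_bv: "Poly_Mapping.lookup (bv M g) x = (if x = (M, g) then 1 else 0)"
  by (simp add: bv_def lookup_single when_def)

lemma vl_eqI: "(\<And>x. Poly_Mapping.lookup u x = Poly_Mapping.lookup v x) \<Longrightarrow> u = (v::vl)"
  by (rule poly_mapping_eqI)

lemma smul_add: "smul c (u + v) = smul c u + smul c v"
  by (rule vl_eqI) (simp add: lookup_add algebra_simps)
lemma smul_add2: "smul (c + d) v = smul c v + smul d v"
  by (rule vl_eqI) (simp add: lookup_add algebra_simps)
lemma smul_0[simp]: "smul 0 v = 0" by (rule vl_eqI) simp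
lemma smul_1[simp]: "smul 1 v = v" by (rule vl_eqI) simp
lemma smul_zero[simp]: "smul c 0 = 0" by (rule vl_eqI) simp
lemma smul_smul[simp]: "smul c (smul d v) = smul (c * d) v" by (rule vl_eqI) simp
lemma smul_sum: "smul c (sum f A) = (\<Sum>x\<in>A. smul c (f x))"
  by (rule vl_eqI) (simp add: lookup_sum sum_distrib_left)
lemma smul_minus1: "smul (-1) v = - v" by (rule vl_eqI) simp

lemma lin_superset:
  assumes "finite S" "Poly_Mapping.keys v \<subseteq> S"
  shows "lin f v = (\<Sum>b\<in>S. smul (Poly_Mapping.lookup v b) (f b))"
  unfolding lin_def
  by (rule sum.mono_neutral_left) (use assms in \<open>auto simp: in_keys_iff\<close>)

lemma lin_add: "lin f (u + v) = lin f u + lin f v"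
proof -
  let ?S = "Poly_Mapping.keys u \<union> Poly_Mapping.keys v"
  have "lin f (u + v) = (\<Sum>b\<in>?S. smul (Poly_Mapping.lookup (u+v) b) (f b))"
    by (rule lin_superset) (auto simp: in_keys_iff lookup_add)
  also have "\<dots> = (\<Sum>b\<in>?S. smul (Poly_Mapping.lookup u b) (f b)) + (\<Sum>b\<in>?S. smul (Poly_Mapping.lookup v b) (f b))"
    by (simp add: lookup_add smul_add2 sum.distrib)
  also have "\<dots> = lin f u + lin f v"
    by (simp add: lin_superset[symmetric])
  finally show ?thesis .
qed

lemma lin_smul: "lin f (smul c v) = smul c (lin f v)"
proof -
  have "lin f (smul c v) = (\<Sum>b\<in>Poly_Mapping.keys v. smul (Poly_Mapping.lookup (smul c v) b) (f b))"
    by (rule lin_superset) (auto simp: in_keys_iff)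
  then show ?thesis by (simp add: lin_def smul_sum)
qed

lemma lin_bv[simp]: "lin f (bv M g) = f (M, g)"
  by (simp add: lin_def bv_def)

lemma lin_zero[simp]: "lin f 0 = 0" by (simp add: lin_def)

lemma lin_neg: "lin f (- v) = - lin f v"
  by (metis lin_smul smul_minus1)
lemma lin_diff: "lin f (u - v) = lin f u - lin f v"
  by (metis diff_conv_add_uminus lin_add lin_neg)


lemma Sop0[simp]: "Sop X 0 = id" by (simp add: Sop_def)
lemma Sop2: "Sop X 2 v = smul (1/2) (X 1 (X 1 v) + X 2 v)"
  by (simp add: Sop_def numeral_2_eq_2 nth_append)

lemma eb_vac: "eb l (-1) ({#}, m) =
   (if ip l m > 0 then 0 else Sop (\<lambda>k. hlat l (- int k)) (nat (- ip l m)) (bv {#} (m + l)))"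
  by (simp add: eb_def wt_def Let_def)

lemma emode_orth: "ip l m = 0 \<Longrightarrow> emode l (-1) (bv {#} m) = bv {#} (m + l)"
  by (simp add: emode_def eb_vac)

lemma emode_pos: "ip l m > 0 \<Longrightarrow> emode l (-1) (bv {#} m) = 0"
  by (simp add: emode_def eb_vac)

lemma emode_neg2: "ip l m = -2 \<Longrightarrow> emode l (-1) (bv {#} m) =
   smul (1/2) (hlat l (-1) (hlat l (-1) (bv {#} (m + l))) + hlat l (-2) (bv {#} (m + l)))"
  by (simp add: emode_def eb_vac Sop2)

lemma hmode_neg: "m > 0 \<Longrightarrow> hmode i (- int m) (bv M g) = bv (add_mset (i, m) M) g"
  by (simp add: hmode_def hb_def)
lemma hmode_m1: "hmode i (-1) (bv M g) = bv (add_mset (i, 1) M) g"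
  using hmode_neg[of 1] by simp
lemma hmode_m2: "hmode i (-2) (bv M g) = bv (add_mset (i, 2) M) g"
  using hmode_neg[of 2] by simp

lemma idxs_UNIV: "idxs = UNIV"
  unfolding idxs_def by (auto intro: idx.exhaust)

lemma sum_idxs: "(\<Sum>i\<in>idxs. f i) = f A1 + f A2 + f A3"
  by (simp add: idxs_def add.assoc)

lemma hlat_unit: "hlat (unitlat i) m v = hmode i m v"
  by (cases i) (simp_all add: hlat_def sum_idxs unitlat_def)
lemma hlat_nunit: "hlat (- unitlat i) m v = - hmode i m v"
  by (cases i) (simp_all add: hlat_def sum_idxs unitlat_def smul_minus1)

lemma hmode_neg_v: "hmode i m (- v) = - hmode i m v"
  by (simp add: hmode_def lin_neg)

lemma ip_unit: "ip (unitlat i) (unitlat j) = (if i = j then 2 else 0)"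
  by (cases i; cases j) (simp_all add: ip_def sum_idxs unitlat_def)
lemma ip_neg1: "ip (- l) m = - ip l m"
  by (simp add: ip_def sum_idxs)
lemma ip_neg2: "ip l (- m) = - ip l m"
  by (simp add: ip_def sum_idxs)

lemma unitlat_eq: "unitlat i = unitlat j \<longleftrightarrow> i = j"
  by (cases i; cases j) (auto simp: unitlat_def fun_eq_iff)
lemma unitlat_neq: "unitlat i \<noteq> - unitlat j"
  by (cases i; cases j) (auto simp: unitlat_def fun_eq_iff)
lemma unitlat_neq': "- unitlat i \<noteq> unitlat j"
  using unitlat_neq by metis
lemma nunitlat_eq: "- unitlat i = - unitlat j \<longleftrightarrow> i = j"
  by (simp add: unitlat_eq)

abbreviation E where "E l \<equiv> estate l"
abbreviation Ep where "Ep i \<equiv> estate (unitlat i) + estate (- unitlat i)"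
abbreviation Em where "Em i \<equiv> estate (unitlat i) - estate (- unitlat i)"

lemmas lk = lookup_add lookup_minus lookup_bv estate_def hstate_def

lemma Y1_h: "Y1 (hstate i) n v = hmode i n v"
  by (cases i) (simp_all add: Y1_def sum_idxs lk)

lemma Y1_Ep: "Y1 (Ep i) n v = emode (unitlat i) n v + emode (- unitlat i) n v"
  by (cases i) (simp_all add: Y1_def sum_idxs lk unitlat_eq unitlat_neq unitlat_neq')

lemma Y1_Em: "Y1 (Em i) n v = emode (unitlat i) n v - emode (- unitlat i) n v"
  by (cases i) (simp_all add: Y1_def sum_idxs lk unitlat_eq unitlat_neq unitlat_neq' smul_minus1)


lemma emode_add: "emode l n (u + v) = emode l n u + emode l n v"
  by (simp add: emode_def lin_add)
lemma emode_diff: "emode l n (u - v) = emode l n u - emode l n v"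
  by (simp add: emode_def lin_diff)

lemma YHH: "Y1 (hstate i) (-1) (hstate j) = bv {#(i,1),(j,1)#} 0"
  unfolding Y1_h by (simp add: hstate_def hmode_m1)

lemma ipfacts:
  "i \<noteq> j \<Longrightarrow> ip (unitlat i) (unitlat j) = 0"
  "i \<noteq> j \<Longrightarrow> ip (- unitlat i) (unitlat j) = 0"
  "i \<noteq> j \<Longrightarrow> ip (unitlat i) (- unitlat j) = 0"
  "i \<noteq> j \<Longrightarrow> ip (- unitlat i) (- unitlat j) = 0"
  "ip (unitlat i) (unitlat i) = 2"
  "ip (- unitlat i) (- unitlat i) = 2"
  "ip (unitlat i) (- unitlat i) = -2"
  "ip (- unitlat i) (unitlat i) = -2"
  by (simp_all add: ip_unit ip_neg1 ip_neg2)

lemma YPP: "i \<noteq> j \<Longrightarrow> Y1 (Ep i) (-1) (Ep j) =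
   E (unitlat j + unitlat i) + E (- unitlat j + unitlat i) + (E (unitlat j + - unitlat i) + E (- unitlat j + - unitlat i))"
  unfolding Y1_Ep by (simp add: emode_add estate_def emode_orth ipfacts)

lemma YMM: "i \<noteq> j \<Longrightarrow> Y1 (Em i) (-1) (Em j) =
   E (unitlat j + unitlat i) - E (- unitlat j + unitlat i) - (E (unitlat j + - unitlat i) - E (- unitlat j + - unitlat i))"
  unfolding Y1_Em by (simp add: emode_diff estate_def emode_orth ipfacts)

lemma YPPii: "Y1 (Ep i) (-1) (Ep i) = bv {#(i,1),(i,1)#} 0"
proof -
  have "Y1 (Ep i) (-1) (Ep i) = smul (1/2) (bv {#(i,1),(i,1)#} 0 + bv {#(i,2)#} 0)
      + smul (1/2) (bv {#(i,1),(i,1)#} 0 + - bv {#(i,2)#} 0)"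
    unfolding Y1_Ep by (simp add: emode_add estate_def emode_pos emode_neg2 ipfacts hlat_unit hlat_nunit
         hmode_neg_v hmode_m1 hmode_m2)
  also have "\<dots> = bv {#(i,1),(i,1)#} 0"
    by (rule vl_eqI) (simp add: lookup_add lookup_minus algebra_simps)
  finally show ?thesis .
qed

lemma keys_bv: "Poly_Mapping.keys (bv M g) = {(M, g)}"
  by (simp add: bv_def)

lemma keys_diff: "Poly_Mapping.keys (u - v :: vl) \<subseteq> Poly_Mapping.keys u \<union> Poly_Mapping.keys v"
  by (auto simp: in_keys_iff lookup_minus)
lemma keys_add': "Poly_Mapping.keys (u + v :: vl) \<subseteq> Poly_Mapping.keys u \<union> Poly_Mapping.keys v"
  by (auto simp: in_keys_iff lookup_add)

lemma V1_h: "hstate i \<in> V1"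
  by (auto simp: V1_def hstate_def keys_bv)
lemma V1_Ep: "Ep i \<in> V1"
  unfolding V1_def using keys_add'[of "E (unitlat i)" "E (- unitlat i)"]
  by (auto simp: estate_def keys_bv)
lemma V1_Em: "Em i \<in> V1"
  unfolding V1_def using keys_diff[of "E (unitlat i)" "E (- unitlat i)"]
  by (auto simp: estate_def keys_bv)

lemma smul_negv: "smul c (- v) = - smul c v"
  by (rule vl_eqI) simp
lemma Y1_negv: "Y1 a n (- v) = - Y1 a n v"
proof -
  have e: "emode l n (- v) = - emode l n v" for l by (simp add: emode_def lin_neg)
  show ?thesis
    by (simp add: Y1_def e hmode_neg_v smul_negv sum_negf[symmetric] algebra_simps)
qed

lemma smul_negc: "smul (- c) v = - smul c v"
  by (rule vl_eqI) simp
lemma Y1_nega: "Y1 (- a) n v = - Y1 a n v"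
  by (simp add: Y1_def smul_negc sum_negf[symmetric] algebra_simps)


locale TT =
  fixes tau :: "vl \<Rightarrow> vl"
  assumes add: "\<And>u v. tau (u + v) = tau u + tau v"
    and hom: "\<And>c v. tau (smul c v) = smul c (tau v)"
    and vacuum: "tau vac = vac"
    and modes: "\<And>a n v. a \<in> V1 \<Longrightarrow> tau (Y1 a n v) = Y1 (tau a) n (tau v)"
    and sig1: "\<And>i. tau (hstate i) = estate (unitlat i) + estate (- unitlat i)"
    and sig2: "\<And>i. tau (estate (unitlat i) + estate (- unitlat i)) = hstate i"
    and sig3: "\<And>i. tau (estate (unitlat i) - estate (- unitlat i))
                    = - (estate (unitlat i) - estate (- unitlat i))"
begin

lemma tau0: "tau 0 = 0"
  using hom[of 0 0] by simp
lemma tau_neg: "tau (- v) = - tau v"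
  using hom[of "-1" v] by (simp add: smul_minus1)
lemma tau_diff: "tau (u - v) = tau u - tau v"
  by (metis add diff_conv_add_uminus tau_neg)
lemma tau_sum: "tau (sum f A) = (\<Sum>x\<in>A. tau (f x))"
  by (induction A rule: infinite_finite_induct) (simp_all add: tau0 add)

lemma tauP: "tau (bv {#(i,1),(j,1)#} 0) = Y1 (Ep i) (-1) (Ep j)"
  using modes[OF V1_h, of i "-1" "hstate j"] by (simp add: YHH sig1)

lemma tauB: "tau (Y1 (Em i) (-1) (Em j)) = Y1 (Em i) (-1) (Em j)"
  using modes[OF V1_Em, of i "-1" "Em j"] by (simp only: sig3 Y1_nega Y1_negv minus_minus)

lemma tauPP: "tau (Y1 (Ep i) (-1) (Ep j)) = bv {#(i,1),(j,1)#} 0"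
  using modes[OF V1_Ep, of i "-1" "Ep j"] by (simp add: sig2 YHH)

lemma pair_pp: assumes "i \<noteq> j"
  shows "tau (E (unitlat j + unitlat i) + E (- unitlat j + - unitlat i))
     = smul (1/2) (bv {#(i,1),(j,1)#} 0 + Y1 (Em i) (-1) (Em j))"
proof -
  have "E (unitlat j + unitlat i) + E (- unitlat j + - unitlat i)
     = smul (1/2) (Y1 (Ep i) (-1) (Ep j) + Y1 (Em i) (-1) (Em j))"
    unfolding YPP[OF assms] YMM[OF assms]
    by (rule vl_eqI) (simp add: lookup_add lookup_minus algebra_simps)
  then show ?thesis by (simp add: hom add tauB tauPP)
qed

lemma pair_pm: assumes "i \<noteq> j"
  shows "tau (E (- unitlat j + unitlat i) + E (unitlat j + - unitlat i))
     = smul (1/2) (bv {#(i,1),(j,1)#} 0 - Y1 (Em i) (-1) (Em j))"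
proof -
  have "E (- unitlat j + unitlat i) + E (unitlat j + - unitlat i)
     = smul (1/2) (Y1 (Ep i) (-1) (Ep j) - Y1 (Em i) (-1) (Em j))"
    unfolding YPP[OF assms] YMM[OF assms]
    by (rule vl_eqI) (simp add: lookup_add lookup_minus algebra_simps)
  then show ?thesis by (simp add: hom tau_diff tauB tauPP)
qed

lemma tau_hsq: "tau (hsq h) = (\<Sum>i\<in>idxs. \<Sum>j\<in>idxs. smul (h i * h j) (Y1 (Ep i) (-1) (Ep j)))"
  by (simp only: hsq_def tau_sum hom tauP)

lemma tau_wminus: "tau (wminus h) = tau (hsq h) - smul 2 (tau (E (sqrt2lat h) + E (- sqrt2lat h)))"
  by (simp add: wminus_def tau_diff hom)
lemma tau_wplus: "tau (wplus h) = tau (hsq h) + smul 2 (tau (E (sqrt2lat h) + E (- sqrt2lat h)))"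
  by (simp add: wplus_def add hom)

end

definition lv :: "int \<Rightarrow> int \<Rightarrow> int \<Rightarrow> lat" where
  "lv a b c = (\<lambda>i. case i of A1 \<Rightarrow> a | A2 \<Rightarrow> b | A3 \<Rightarrow> c)"

lemma ul: "unitlat A1 = lv 1 0 0" "unitlat A2 = lv 0 1 0" "unitlat A3 = lv 0 0 1"
  by (auto simp: unitlat_def lv_def fun_eq_iff split: idx.split)
lemma lv_add: "lv a b c + lv d e f = lv (a + d) (b + e) (c + f)"
  by (auto simp: lv_def fun_eq_iff split: idx.split)
lemma lv_neg: "- lv a b c = lv (- a) (- b) (- c)"
  by (auto simp: lv_def fun_eq_iff split: idx.split)
lemma lv_zero: "(0::lat) = lv 0 0 0"
  by (auto simp: lv_def fun_eq_iff split: idx.split)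

lemma r2nz: "r2 \<noteq> 0" by (simp add: r2_def)
lemma r2sq: "r2 * r2 = 2" by (simp add: r2_def flip: of_real_mult)

lemma s2l: assumes "\<And>i. r2 * h i = of_int (l i)" shows "sqrt2lat h = l"
  unfolding sqrt2lat_def
proof (rule ext)
  fix i show "(THE k::int. of_int k = complex_of_real (sqrt 2) * h i) = l i"
    using assms[of i] by (intro the_equality) (auto simp: r2_def)
qed

lemmas bdefs = beta1_def beta2_def beta3_def

lemma sl1: "sqrt2lat beta1 = unitlat A2 + unitlat A1"
  by (rule s2l, case_tac i) (auto simp: bdefs unitlat_def r2nz)
lemma sl2: "sqrt2lat beta2 = unitlat A3 + - unitlat A2"
  by (rule s2l, case_tac i) (auto simp: bdefs unitlat_def r2nz)
lemma sl12: "sqrt2lat (beta1 + beta2) = unitlat A3 + unitlat A1"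
  by (rule s2l, case_tac i) (auto simp: bdefs unitlat_def r2nz field_simps)
lemma sl3: "sqrt2lat beta3 = unitlat A2 + - unitlat A1"
  by (rule s2l, case_tac i) (auto simp: bdefs unitlat_def r2nz)
lemma sl23: "sqrt2lat (beta2 + beta3) = unitlat A3 + - unitlat A1"
  by (rule s2l, case_tac i) (auto simp: bdefs unitlat_def r2nz field_simps)
lemma sl123: "sqrt2lat (beta1 + beta2 + beta3) = unitlat A3 + unitlat A2"
  by (rule s2l, case_tac i) (auto simp: bdefs unitlat_def r2nz field_simps)

lemma neg_sum: "- ((a::lat) + b) = - a + - b" by simp

context TT begin

lemma tp1: "tau (E (sqrt2lat beta1) + E (- sqrt2lat beta1))
   = smul (1/2) (bv {#(A1,1),(A2,1)#} 0 + Y1 (Em A1) (-1) (Em A2))"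
  unfolding sl1 neg_sum by (rule pair_pp) simp
lemma tp12: "tau (E (sqrt2lat (beta1 + beta2)) + E (- sqrt2lat (beta1 + beta2)))
   = smul (1/2) (bv {#(A1,1),(A3,1)#} 0 + Y1 (Em A1) (-1) (Em A3))"
  unfolding sl12 neg_sum by (rule pair_pp) simp
lemma tp123: "tau (E (sqrt2lat (beta1 + beta2 + beta3)) + E (- sqrt2lat (beta1 + beta2 + beta3)))
   = smul (1/2) (bv {#(A2,1),(A3,1)#} 0 + Y1 (Em A2) (-1) (Em A3))"
  unfolding sl123 neg_sum by (rule pair_pp) simp
lemma tp2: "tau (E (sqrt2lat beta2) + E (- sqrt2lat beta2))
   = smul (1/2) (bv {#(A2,1),(A3,1)#} 0 - Y1 (Em A2) (-1) (Em A3))"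
  unfolding sl2 neg_sum minus_minus add.commute[of "E (unitlat A3 + - unitlat A2)"]
  by (rule pair_pm) simp
lemma tp3: "tau (E (sqrt2lat beta3) + E (- sqrt2lat beta3))
   = smul (1/2) (bv {#(A1,1),(A2,1)#} 0 - Y1 (Em A1) (-1) (Em A2))"
  unfolding sl3 neg_sum minus_minus add.commute[of "E (unitlat A2 + - unitlat A1)"]
  by (rule pair_pm) simp
lemma tp23: "tau (E (sqrt2lat (beta2 + beta3)) + E (- sqrt2lat (beta2 + beta3)))
   = smul (1/2) (bv {#(A1,1),(A3,1)#} 0 - Y1 (Em A1) (-1) (Em A3))"
  unfolding sl23 neg_sum minus_minus add.commute[of "E (unitlat A3 + - unitlat A1)"]
  by (rule pair_pm) simp

end

lemma Phi1: "Phi 1 = [beta1]" and Phi2: "Phi 2 = [beta1, beta2, beta1 + beta2]"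
  and Phi3: "Phi 3 = [beta1, beta2, beta1 + beta2, beta3, beta2 + beta3, beta1 + beta2 + beta3]"
  by (simp_all add: Phi_def)

context TT begin
definition tpair where "tpair h = tau (E (sqrt2lat h) + E (- sqrt2lat h))"

lemma tau_wminus': "tau (wminus h) = tau (hsq h) - smul 2 (tpair h)"
  by (simp add: tau_wminus tpair_def)
lemma tau_wplus': "tau (wplus h) = tau (hsq h) + smul 2 (tpair h)"
  by (simp add: tau_wplus tpair_def)

lemmas tps = tp1[folded tpair_def] tp2[folded tpair_def] tp3[folded tpair_def]
  tp12[folded tpair_def] tp23[folded tpair_def] tp123[folded tpair_def]

lemmas st1 = sS_def omega_def Phi1 Phi2 Phi3 list.map sum_list.Cons sum_list.Nil add_0_right
   hom add tau_wminus' tau_wplus' tau_hsq tps tau_diff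

lemmas st2 = sum_idxs YPPii YPP YMM idx.distinct simp_thms
   sl1 sl2 sl12 sl3 sl23 sl123 wplus_def wminus_def hsq_def

lemma c1: "tau (sS 1) = smul (1 / 8) (wplus beta3)"
  apply (simp only: st1)
  apply (simp only: st2)
  apply (rule vl_eqI)
  apply (simp add: lookup_add lookup_minus estate_def bdefs ul lv_add lv_neg lv_zero add_mset_commute r2sq)
  apply (simp add: field_simps)?
  done

lemma c2: "tau (sS 2) = smul (1 / 10) (wplus beta3 + wminus beta2 + wplus (beta2 + beta3))"
  apply (simp only: st1)
  apply (simp only: st2)
  apply (rule vl_eqI)
  apply (simp add: lookup_add lookup_minus estate_def bdefs ul lv_add lv_neg lv_zero add_mset_commute r2sq)
  apply (simp add: field_simps)?
  done

lemma c3: "tau (sS 3) = smul (1 / 12) (wplus beta3 + wminus beta2 + wplus (beta2 + beta3) + wminus beta3 + wminus (beta2 + beta3) + wplus beta2)"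
  apply (simp only: st1)
  apply (simp only: st2)
  apply (rule vl_eqI)
  apply (simp add: lookup_add lookup_minus estate_def bdefs ul lv_add lv_neg lv_zero add_mset_commute r2sq)
  apply (simp add: field_simps)?
  done

lemma c4: "tau (sS 3) = smul (1 / 6) (hsq beta2 + hsq beta3 + hsq (beta2 + beta3))"
  apply (simp only: st1)
  apply (simp only: st2)
  apply (rule vl_eqI)
  apply (simp add: lookup_add lookup_minus estate_def bdefs ul lv_add lv_neg lv_zero add_mset_commute r2sq)
  apply (simp add: field_simps)?
  done

lemma c5: "tau omega = omega"
  apply (simp only: st1)
  apply (simp only: st2)
  apply (rule vl_eqI)
  apply (simp add: lookup_add lookup_minus estate_def bdefs ul lv_add lv_neg lv_zero add_mset_commute r2sq)
  apply (simp add: field_simps)?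
  done

end
theorem lemma3p5:
  fixes tau :: "vl \<Rightarrow> vl"
  assumes add: "\<And>u v. tau (u + v) = tau u + tau v"
    and hom: "\<And>c v. tau (smul c v) = smul c (tau v)"
    and vacuum: "tau vac = vac"
    and modes: "\<And>a n v. a \<in> V1 \<Longrightarrow> tau (Y1 a n v) = Y1 (tau a) n (tau v)"
    and sig1: "\<And>i. tau (hstate i) = estate (unitlat i) + estate (- unitlat i)"
    and sig2: "\<And>i. tau (estate (unitlat i) + estate (- unitlat i)) = hstate i"
    and sig3: "\<And>i. tau (estate (unitlat i) - estate (- unitlat i))
                    = - (estate (unitlat i) - estate (- unitlat i))"
  shows "tau (sS 1) = smul (1 / 8) (wplus beta3)
    \<and> tau (sS 2) = smul (1 / 10) (wplus beta3 + wminus beta2 + wplus (beta2 + beta3))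
    \<and> tau (sS 3) = smul (1 / 12) (wplus beta3 + wminus beta2 + wplus (beta2 + beta3)
                        + wminus beta3 + wminus (beta2 + beta3) + wplus beta2)
    \<and> tau (sS 3) = smul (1 / 6) (hsq beta2 + hsq beta3 + hsq (beta2 + beta3))
    \<and> tau omega = omega"
proof -
  interpret TT tau
    by (unfold_locales; fact add hom vacuum modes sig1 sig2 sig3)
  show ?thesis using c1 c2 c3 c4 c5 by blast
qed

end
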